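(* Fix $k\ge2$ and let $Z^{(1)},\dots,Z^{(k)}$ be independent copies of $Z$. In the $k$-choice model: (1) if $\mathbb{E}\min_{1\le i\le k}Z^{(i)}<\infty$, then $\sup_{n\in\mathbb{N}}|R_n|<\infty$ almost surely; (2) if $\mathbb{E}\min_{1\le i\le k}Z^{(i)}=\infty$, then $\sup_{n\in\mathbb{N}}|R_n|=\infty$ almost surely.
   Context: Let $Z$ be a random variable on $\mathbb{N}=\{1,2,3,\dots\}$. Fix $k\ge2$ and let $(Z^{(1)}_n)_{n\ge1},\dots,(Z^{(k)}_n)_{n\ge1}$ be $k$ independent sequences of i.i.d. random variables, all distributed as $Z$ and mutually independent. The $k$-choice model: define $T_n=\{n\}$ for $n\le0$ and $T_n=\{n\}\cup\bigcup_{i=1}^k T_{n-Z^{(i)}_n}$ for $n\ge1$. Let $\mathcal{L}_n=T_n\cap\{0,-1,-2,\dots\}$ and $R_n=\max\mathcal{L}_n$. *)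

theory Defs
  imports "HOL-Probability.Probability"
begin

text \<open>Given realised values z i n (the value of Z^(i)_n,
 with choices indexed by i < k and times n \<ge> 1), T_n is the least set with
 n \<in> T_n and, for n \<ge> 1, T_{n - z i n} \<subseteq> T_n for all i < k.\<close>

inductive inT :: "nat \<Rightarrow> (nat \<Rightarrow> nat \<Rightarrow> nat) \<Rightarrow> int \<Rightarrow> int \<Rightarrow> bool"
  for k :: nat and z :: "nat \<Rightarrow> nat \<Rightarrow> nat" where
  self: "inT k z n n"
| step: "1 \<le> n \<Longrightarrow> i < k \<Longrightarrow> inT k z (n - int (z i (nat n))) x \<Longrightarrow> inT k z n x"

definition Tset :: "nat \<Rightarrow> (nat \<Rightarrow> nat \<Rightarrow> nat) \<Rightarrow> int \<Rightarrow> int set" where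
  "Tset k z n = {x. inT k z n x}"

definition Lset :: "nat \<Rightarrow> (nat \<Rightarrow> nat \<Rightarrow> nat) \<Rightarrow> int \<Rightarrow> int set" where
  "Lset k z n = Tset k z n \<inter> {..0}"

definition Rval :: "nat \<Rightarrow> (nat \<Rightarrow> nat \<Rightarrow> nat) \<Rightarrow> int \<Rightarrow> int" where
  "Rval k z n = Max (Lset k z n)"

end

theory Submission
  imports Defs
begin


lemma inT_le: "inT k z n x \<Longrightarrow> x \<le> n"
  by (induction rule: inT.induct) auto

lemma inT_lower:
  assumes "inT k z n x" "n \<le> N"
    "\<And>i m. i < k \<Longrightarrow> 1 \<le> m \<Longrightarrow> int m \<le> N \<Longrightarrow> z i m \<le> C"
  shows "min n (- int C) \<le> x"
  using assms
proof (induction rule: inT.induct)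
  case (self n) then show ?case by simp
next
  case (step n i x)
  have "z i (nat n) \<le> C" using step by (intro step.prems(2)) auto
  then have "n - int (z i (nat n)) \<ge> 1 - int C" using step by linarith
  moreover have "min (n - int (z i (nat n))) (- int C) \<le> x" using step by simp
  ultimately show ?case by linarith
qed

lemma inT_nonpos: "inT k z m x \<Longrightarrow> m \<le> 0 \<Longrightarrow> x = m"
  by (induction rule: inT.induct) auto

lemma inT_cases1: "inT k z n x \<Longrightarrow> x = n \<or> (1 \<le> n \<and> (\<exists>i<k. inT k z (n - int (z i (nat n))) x))"
  by (cases rule: inT.cases) auto

lemma Lset_finite: "finite (Lset k z n)"
proof -
  define C where "C = Max ((\<lambda>(i,m). z i m) ` ({..<k} \<times> {1..nat n}))"
  have "\<And>i m. i < k \<Longrightarrow> 1 \<le> m \<Longrightarrow> int m \<le> n \<Longrightarrow> z i m \<le> C"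
    unfolding C_def by (rule Max_ge) force+
  then have "Lset k z n \<subseteq> {min n (- int C)..0}"
    unfolding Lset_def Tset_def using inT_lower[of k z n _ n C] by auto
  then show ?thesis using finite_subset by blast
qed

lemma exists_good:
  assumes "\<And>m. 1 \<le> m \<Longrightarrow> \<exists>i<k. z i m \<le> m + B \<and> 1 \<le> z i m"
  shows "1 \<le> n \<Longrightarrow> \<exists>x. inT k z (int n) x \<and> - int B \<le> x \<and> x \<le> 0"
proof (induction n rule: less_induct)
  case (less n)
  obtain i where i: "i < k" "z i n \<le> n + B" "1 \<le> z i n" using assms less.prems by blast
  show ?case
  proof (cases "z i n \<ge> n")
    case True
    have "inT k z (int n) (int n - int (z i n))"
      using inT.step[of "int n" i k z "int n - int (z i n)"] inT.self i less.prems by simp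
    then show ?thesis using True i by (intro exI[of _ "int n - int (z i n)"]) auto
  next
    case False
    then obtain x where x: "inT k z (int (n - z i n)) x" "- int B \<le> x" "x \<le> 0"
    proof -
      have "n - z i n < n" "1 \<le> n - z i n" using False i by auto
      then show ?thesis using less.IH[of "n - z i n"] that by blast
    qed
    have "inT k z (int n) x"
      using inT.step[of "int n" i k z x] x(1) i less.prems False by (simp add: of_nat_diff)
    then show ?thesis using x by blast
  qed
qed

lemma Rval_bound:
  assumes "\<And>m. 1 \<le> m \<Longrightarrow> \<exists>i<k. z i m \<le> m + B \<and> 1 \<le> z i m" "1 \<le> n"
  shows "\<bar>Rval k z (int n)\<bar> \<le> int B"
proof -
  obtain x where x: "inT k z (int n) x" "- int B \<le> x" "x \<le> 0" using exists_good assms by blast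
  have xL: "x \<in> Lset k z (int n)" using x by (simp add: Lset_def Tset_def)
  have "x \<le> Rval k z (int n)" unfolding Rval_def using Lset_finite xL by (rule Max_ge)
  moreover have "Rval k z (int n) \<in> Lset k z (int n)" unfolding Rval_def
    using Lset_finite xL by (intro Max_in) auto
  then have "Rval k z (int n) \<le> 0" by (simp add: Lset_def)
  ultimately show ?thesis using x by linarith
qed

lemma Rval_big:
  assumes "1 \<le> k" "1 \<le> n" "\<And>i. i < k \<Longrightarrow> n + b < z i n"
  shows "int b < \<bar>Rval k z (int n)\<bar>"
proof -
  have sub: "Lset k z (int n) \<subseteq> (\<lambda>i. int n - int (z i n)) ` {..<k}"
  proof
    fix x assume "x \<in> Lset k z (int n)"
    then have x: "inT k z (int n) x" "x \<le> 0" by (auto simp: Lset_def Tset_def)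
    then have "x \<noteq> int n" using assms by auto
    then obtain i where "i < k" "inT k z (int n - int (z i n)) x" using inT_cases1[OF x(1)] by auto
    moreover have "int n - int (z i n) \<le> 0" using assms(3)[OF \<open>i<k\<close>] by simp
    ultimately show "x \<in> (\<lambda>i. int n - int (z i n)) ` {..<k}" using inT_nonpos by blast
  qed
  have "int n - int (z 0 n) \<in> Lset k z (int n)"
    using inT.step[of "int n" 0 k z "int n - int (z 0 n)"] inT.self assms(1,2) assms(3)[of 0]
    by (simp add: Lset_def Tset_def)
  then have "Rval k z (int n) \<in> Lset k z (int n)" unfolding Rval_def
    using Lset_finite by (intro Max_in) auto
  then obtain i where "i < k" "Rval k z (int n) = int n - int (z i n)" using sub by auto
  then show ?thesis using assms(3)[of i] by simp
qed


locale kmodel = prob_space M for M :: "'a measure" +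
  fixes p :: "nat pmf" and k :: nat and X :: "nat \<Rightarrow> nat \<Rightarrow> 'a \<Rightarrow> nat"
  assumes k2: "k \<ge> 2"
    and p0: "0 \<notin> set_pmf p"
    and Xm: "\<And>i n. i < k \<Longrightarrow> 1 \<le> n \<Longrightarrow> X i n \<in> measurable M (count_space UNIV)"
    and Xd: "\<And>i n. i < k \<Longrightarrow> 1 \<le> n \<Longrightarrow> distr M (count_space UNIV) (X i n) = measure_pmf p"
    and ind: "indep_vars (\<lambda>_. count_space UNIV) (\<lambda>(i, n). X i n) ({..<k} \<times> {1..})"
begin

lemma k1: "1 \<le> k" using k2 by simp

lemma ne_k[simp]: "{..<k} \<noteq> {}"
proof -
  have "0 \<in> {..<k}" using k1 by simp
  then show ?thesis by blast
qed

lemma sets_all: "1 \<le> n \<Longrightarrow> {\<omega>\<in>space M. \<forall>i<k. P i (X i n \<omega>)} \<in> events"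
proof -
  assume n: "1 \<le> n"
  have "Measurable.pred M (\<lambda>\<omega>. \<forall>i\<in>{..<k}. P i (X i n \<omega>))"
  proof (rule pred_intros_finite(3)[OF finite_lessThan])
    fix i assume "i \<in> {..<k}"
    then show "Measurable.pred M (\<lambda>\<omega>. P i (X i n \<omega>))"
      using n by (intro measurable_compose[OF Xm]) auto
  qed
  then have "{\<omega>\<in>space M. \<forall>i\<in>{..<k}. P i (X i n \<omega>)} \<in> events" by (simp only: pred_def)
  then show ?thesis by (simp only: lessThan_iff Ball_def)
qed

lemma prob_X: "i < k \<Longrightarrow> 1 \<le> n \<Longrightarrow> prob (X i n -` A \<inter> space M) = measure p A"
  using measure_distr[OF Xm, of i n A] Xd[of i n] by simp

lemma prob_all_gt: "1 \<le> n \<Longrightarrow> prob {\<omega>\<in>space M. \<forall>i<k. t < X i n \<omega>} = measure p {t<..} ^ k"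
proof -
  assume n: "1 \<le> n"
  let ?J = "{..<k} \<times> {n}"
  have eq: "{\<omega>\<in>space M. \<forall>i<k. t < X i n \<omega>} = (\<Inter>j\<in>?J. (\<lambda>(i, n). X i n) j -` {t<..} \<inter> space M)"
    by auto
  have "prob (\<Inter>j\<in>?J. (\<lambda>(i, n). X i n) j -` {t<..} \<inter> space M)
      = (\<Prod>j\<in>?J. prob ((\<lambda>(i, n). X i n) j -` {t<..} \<inter> space M))"
    using n by (intro indep_varsD[OF ind]) auto
  also have "\<dots> = (\<Prod>j\<in>?J. measure p {t<..})"
    by (intro prod.cong refl) (use n prob_X in auto)
  also have "\<dots> = measure p {t<..} ^ k" by simp
  finally show ?thesis using eq by simp
qed

definition c :: "nat \<Rightarrow> real" where "c t = measure p {t<..} ^ k"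

lemma c_nonneg: "0 \<le> c t" by (simp add: c_def)

lemma E_eq: "(\<integral>\<^sup>+ \<omega>. of_nat (Min ((\<lambda>i. X i 1 \<omega>) ` {..<k})) \<partial>M) = (\<Sum>j. ennreal (c j))"
proof -
  define E where "E j = {\<omega>\<in>space M. \<forall>i<k. j < X i 1 \<omega>}" for j
  have E: "E j \<in> events" for j unfolding E_def by (rule sets_all) simp
  have "(\<integral>\<^sup>+ \<omega>. of_nat (Min ((\<lambda>i. X i 1 \<omega>) ` {..<k})) \<partial>M) = (\<integral>\<^sup>+ \<omega>. (\<Sum>j. indicator (E j) \<omega>) \<partial>M)"
  proof (rule nn_integral_cong)
    fix \<omega> assume \<omega>: "\<omega> \<in> space M"
    define m where "m = Min ((\<lambda>i. X i 1 \<omega>) ` {..<k})"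
    have "indicator (E j) \<omega> = (if j < m then 1 else (0::ennreal))" for j
    proof -
      have ne: "(\<lambda>i. X i 1 \<omega>) ` {..<k} \<noteq> {}" by simp
      show ?thesis using \<omega> by (auto simp add: E_def m_def indicator_def Min_gr_iff[OF _ ne])
    qed
    then have "(\<Sum>j. indicator (E j) \<omega>) = (\<Sum>j. (if j < m then 1 else (0::ennreal)))" by simp
    also have "\<dots> = (\<Sum>j<m. (if j < m then 1 else (0::ennreal)))"
      by (rule suminf_finite) auto
    also have "\<dots> = of_nat m" by simp
    finally show "(of_nat (Min ((\<lambda>i. X i 1 \<omega>) ` {..<k}))::ennreal) = (\<Sum>j. indicator (E j) \<omega>)"
      by (simp add: m_def)
  qed
  also have "\<dots> = (\<Sum>j. \<integral>\<^sup>+ \<omega>. indicator (E j) \<omega> \<partial>M)"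
    by (intro nn_integral_suminf borel_measurable_indicator E)
  also have "\<dots> = (\<Sum>j. ennreal (c j))"
  proof -
    have "emeasure M (E j) = ennreal (c j)" for j
      using prob_all_gt[of 1 j] by (simp add: emeasure_eq_measure E_def c_def)
    then show ?thesis using E by simp
  qed
  finally show ?thesis .
qed

lemma c_le1: "c t \<le> 1"
  unfolding c_def by (intro power_le_one) auto

lemma nonzero: "AE \<omega> in M. \<forall>i. \<forall>m. i < k \<longrightarrow> 1 \<le> m \<longrightarrow> X i m \<omega> \<noteq> 0"
proof -
  have one: "AE \<omega> in M. X i m \<omega> \<noteq> 0" if im: "i < k" "1 \<le> m" for i m
  proof -
    have S: "X i m -` {0} \<inter> space M \<in> events"
      using Xm[OF im] by (rule measurable_sets) simp
    have "prob (X i m -` {0} \<inter> space M) = measure p {0}" using prob_X[OF im] .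
    also have "\<dots> = 0" using p0 by (simp add: measure_pmf_single set_pmf_eq)
    finally have "emeasure M (X i m -` {0} \<inter> space M) = 0"
      by (simp add: emeasure_eq_measure)
    moreover have "{\<omega>\<in>space M. \<not> X i m \<omega> \<noteq> 0} = X i m -` {0} \<inter> space M" by auto
    ultimately show ?thesis using AE_iff_measurable[OF S] by simp
  qed
  have "AE \<omega> in M. i < k \<longrightarrow> 1 \<le> m \<longrightarrow> X i m \<omega> \<noteq> 0" for i m
    using one[of i m] by (cases "i < k \<and> 1 \<le> m") auto
  then have "AE \<omega> in M. \<forall>m. i < k \<longrightarrow> 1 \<le> m \<longrightarrow> X i m \<omega> \<noteq> 0" for i
    by (subst AE_all_countable) auto
  then show ?thesis by (subst AE_all_countable) auto
qed

lemma part1: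
  assumes fin: "(\<Sum>j. ennreal (c j)) < \<infinity>"
  shows "AE \<omega> in M. \<exists>B::int. \<forall>n::nat. 1 \<le> n \<longrightarrow> \<bar>Rval k (\<lambda>i m. X i m \<omega>) (int n)\<bar> \<le> B"
proof -
  have summ: "summable c" using fin by (intro summable_suminf_not_top c_nonneg) auto
  define A where "A n = {\<omega>\<in>space M. \<forall>i<k. Suc n < X i (Suc n) \<omega>}" for n
  have A: "A n \<in> events" for n unfolding A_def by (rule sets_all) simp
  have mA: "measure M (A n) = c (Suc n)" for n
    unfolding A_def c_def by (rule prob_all_gt) simp
  have "summable (\<lambda>n. measure M (A n))" using summ by (simp add: mA summable_Suc_iff)
  then have BC: "AE \<omega> in M. eventually (\<lambda>n. \<omega> \<in> space M - A n) sequentially"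
    using A by (intro borel_cantelli_AE1) (auto simp: emeasure_eq_measure)
  show ?thesis using BC nonzero
  proof eventually_elim
    case (elim \<omega>)
    then obtain N where N: "\<And>n. n \<ge> N \<Longrightarrow> \<omega> \<in> space M - A n" by (auto simp: eventually_sequentially)
    define B where "B = (\<Sum>m\<in>{1..Suc N}. X 0 m \<omega>)"
    have good: "\<exists>i<k. X i m \<omega> \<le> m + B \<and> 1 \<le> X i m \<omega>" if m: "1 \<le> m" for m
    proof (cases "m \<le> Suc N")
      case True
      have "X 0 m \<omega> \<le> B" unfolding B_def using True m by (intro member_le_sum) auto
      moreover have "X 0 m \<omega> \<noteq> 0" using elim(2) m k1 by auto
      ultimately show ?thesis using k1 by (intro exI[of _ 0]) auto
    next
      case False
      then obtain n where n: "m = Suc n" "n \<ge> N" by (cases m) auto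
      then have "\<omega> \<in> space M - A n" using N by auto
      then obtain i where i: "i < k" "X i m \<omega> \<le> m" using n unfolding A_def by auto
      moreover have "X i m \<omega> \<noteq> 0" using elim(2) m i by auto
      ultimately show ?thesis by (intro exI[of _ i]) auto
    qed
    show ?case
      using Rval_bound[where z="\<lambda>i m. X i m \<omega>" and k=k and B=B] good by blast
  qed
qed

lemma prod_exp_bound:
  fixes x :: "nat \<Rightarrow> real"
  assumes "\<And>j. 0 \<le> x j" "\<And>j. x j \<le> 1"
  shows "(\<Prod>j<N. 1 - x j) \<le> exp (- (\<Sum>j<N. x j))"
proof (induction N)
  case 0 then show ?case by simp
next
  case (Suc N)
  have "(\<Prod>j<Suc N. 1 - x j) = (\<Prod>j<N. 1 - x j) * (1 - x N)" by simp
  also have "\<dots> \<le> exp (- (\<Sum>j<N. x j)) * exp (- x N)"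
  proof (rule mult_mono)
    show "1 - x N \<le> exp (- x N)" using exp_ge_add_one_self[of "- x N"] by simp
    show "0 \<le> exp (- (\<Sum>j<N. x j))" by simp
    show "0 \<le> 1 - x N" using assms(2)[of N] by simp
  qed (rule Suc.IH)
  also have "\<dots> = exp (- (\<Sum>j<Suc N. x j))" by (simp add: exp_add[symmetric])
  finally show ?case .
qed

lemma Yf_meas: "(\<lambda>f. \<forall>i<k. n + b < (f (i,n)::nat)) \<in> measurable (PiM ({..<k}\<times>{n}) (\<lambda>_. count_space UNIV)) (count_space UNIV)"
proof -
  have m: "\<And>i. i < k \<Longrightarrow> (\<lambda>f. f (i,n)::nat) \<in> measurable (PiM ({..<k}\<times>{n}) (\<lambda>_. count_space UNIV)) (count_space UNIV)"
    by (rule measurable_component_singleton) auto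
  have "Measurable.pred (PiM ({..<k}\<times>{n}) (\<lambda>_. count_space UNIV)) (\<lambda>f. \<forall>i\<in>{..<k}. n + b < (f (i,n)::nat))"
    by (rule pred_intros_finite(3)[OF finite_lessThan]) (auto intro: measurable_compose[OF m])
  then show ?thesis by (simp add: lessThan_iff)
qed

lemma part2b:
  assumes ns: "\<not> summable c"
  shows "AE \<omega> in M. \<exists>n. 1 \<le> n \<and> (\<forall>i<k. n + b < X i n \<omega>)"
proof -
  define Ac where "Ac n = {\<omega>\<in>space M. \<not> (\<forall>i<k. n + b < X i n \<omega>)}" for n
  have r: "indep_vars (\<lambda>n. PiM ({..<k}\<times>{n}) (\<lambda>_. count_space UNIV))
     (\<lambda>n \<omega>. restrict (\<lambda>j. (\<lambda>(i, n). X i n) j \<omega>) ({..<k}\<times>{n})) {1..}"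
    by (rule indep_vars_restrict[OF ind]) (auto simp: disjoint_family_on_def)
  have r2: "indep_vars (\<lambda>_. count_space UNIV)
     (\<lambda>n \<omega>. (\<lambda>f. \<forall>i<k. n + b < (f (i,n)::nat)) (restrict (\<lambda>j. (\<lambda>(i, n). X i n) j \<omega>) ({..<k}\<times>{n}))) {1..}"
    by (rule indep_vars_compose2[OF r Yf_meas])
  have ie: "indep_events (\<lambda>n. {\<omega>\<in>space M. \<not> (\<lambda>f. \<forall>i<k. n + b < (f (i,n)::nat)) (restrict (\<lambda>j. (\<lambda>(i, n). X i n) j \<omega>) ({..<k}\<times>{n}))}) {1..}"
    by (rule indep_eventsI_indep_vars[OF r2, where P="\<lambda>_ x. \<not> x"]) simp
  have eqA: "{\<omega>\<in>space M. \<not> (\<lambda>f. \<forall>i<k. n + b < (f (i,n)::nat)) (restrict (\<lambda>j. (\<lambda>(i, n). X i n) j \<omega>) ({..<k}\<times>{n}))} = Ac n" for n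
    by (auto simp: Ac_def)
  have ie2: "indep_events Ac {1..}" using ie by (simp only: eqA)
  have pA: "prob (Ac n) = 1 - c (n + b)" if n: "1 \<le> n" for n
  proof -
    have S: "{\<omega>\<in>space M. \<forall>i<k. n + b < X i n \<omega>} \<in> events" using n by (rule sets_all)
    have "Ac n = space M - {\<omega>\<in>space M. \<forall>i<k. n + b < X i n \<omega>}" by (auto simp: Ac_def)
    then show ?thesis using prob_compl[OF S] prob_all_gt[OF n, of "n + b"] by (simp add: c_def)
  qed
  have Aev: "Ac n \<in> events" if "1 \<le> n" for n
  proof -
    have eq: "Ac n = space M - {\<omega>\<in>space M. \<forall>i<k. n + b < X i n \<omega>}" by (auto simp: Ac_def)
    have S: "{\<omega>\<in>space M. \<forall>i<k. n + b < X i n \<omega>} \<in> events" using that by (rule sets_all)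
    show ?thesis unfolding eq by (rule sets.compl_sets[OF S])
  qed
  define I where "I = (\<Inter>n. Ac (Suc n))"
  have AevS: "Ac (Suc n) \<in> events" for n using Aev[of "Suc n"] by simp
  have rg: "(\<lambda>n. Ac (Suc n)) ` UNIV \<subseteq> events" using AevS by blast
  have Iev: "I \<in> events" unfolding I_def using sets.countable_INT[OF rg UNIV_not_empty] .
  define x where "x j = c (Suc j + b)" for j
  have x01: "0 \<le> x j" "x j \<le> 1" for j unfolding x_def by (auto intro: c_nonneg c_le1)
  have bnd: "prob I \<le> exp (- (\<Sum>j<N. x j))" if N: "1 \<le> N" for N
  proof -
    have J: "Suc ` {..<N} \<subseteq> {1..}" "finite (Suc ` {..<N})" "Suc ` {..<N} \<noteq> {}"
    proof -
      have "0 \<in> {..<N}" using N by simp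
      then show "Suc ` {..<N} \<noteq> {}" by blast
    qed auto
    have "prob I \<le> prob (\<Inter>n\<in>Suc ` {..<N}. Ac n)"
    proof (rule finite_measure_mono)
      show "I \<subseteq> (\<Inter>n\<in>Suc ` {..<N}. Ac n)" unfolding I_def by blast
      show "(\<Inter>n\<in>Suc ` {..<N}. Ac n) \<in> events"
        using J(2,3) by (rule sets.finite_INT) (auto simp: AevS)
    qed
    also have "\<dots> = (\<Prod>n\<in>Suc ` {..<N}. prob (Ac n))"
    proof -
      have "\<forall>J\<subseteq>{1..}. J \<noteq> {} \<longrightarrow> finite J \<longrightarrow> prob (\<Inter>(Ac ` J)) = (\<Prod>j\<in>J. prob (Ac j))"
        using ie2 unfolding indep_events_def by blast
      then show ?thesis using J by blast
    qed
    also have "\<dots> = (\<Prod>j<N. 1 - x j)"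
      by (simp add: prod.reindex pA x_def)
    also have "\<dots> \<le> exp (- (\<Sum>j<N. x j))" using x01 by (intro prod_exp_bound) auto
    finally show ?thesis .
  qed
  have nsx: "\<not> summable x"
  proof
    assume "summable x"
    moreover have "(\<lambda>j. c (j + Suc b)) = x" by (rule ext) (simp add: x_def)
    ultimately have "summable (\<lambda>j. c (j + Suc b))" by simp
    then show False using ns summable_iff_shift[of c "Suc b"] by simp
  qed
  have p0: "prob I = 0"
  proof (rule ccontr)
    assume "prob I \<noteq> 0"
    then have q: "0 < prob I" using measure_nonneg[of M I] by linarith
    define y where "y = 1 - ln (prob I)"
    have "\<not> (\<forall>N. sum x {..<N} \<le> y)" using nsx summableI_nonneg_bounded[of x y] x01 by blast
    then obtain N where Ny: "y < sum x {..<N}" by (auto simp: not_le)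
    have "ln (prob I) \<le> 0" using q prob_le_1 by (simp add: ln_le_zero_iff)
    then have "1 \<le> y" by (simp add: y_def)
    then have "N \<noteq> 0" using Ny by (cases N) auto
    then have "prob I \<le> exp (- sum x {..<N})" using bnd by simp
    also have "\<dots> < exp (- y)" using Ny by simp
    also have "\<dots> = exp (ln (prob I)) / exp 1" by (simp add: y_def exp_diff)
    also have "\<dots> = prob I / exp 1" using q by simp
    also have "\<dots> \<le> prob I" using q by (simp add: divide_le_eq)
    finally show False by simp
  qed
  have "{\<omega>\<in>space M. \<not> (\<exists>n. 1 \<le> n \<and> (\<forall>i<k. n + b < X i n \<omega>))} = I"
  proof (intro set_eqI iffI)
    fix \<omega> assume "\<omega> \<in> {\<omega>\<in>space M. \<not> (\<exists>n. 1 \<le> n \<and> (\<forall>i<k. n + b < X i n \<omega>))}"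
    then have sp: "\<omega> \<in> space M" and nn: "\<And>n. 1 \<le> n \<Longrightarrow> \<not> (\<forall>i<k. n + b < X i n \<omega>)" by auto
    have "\<omega> \<in> Ac (Suc n)" for n unfolding Ac_def using sp nn[of "Suc n"] by simp
    then show "\<omega> \<in> I" unfolding I_def by blast
  next
    fix \<omega> assume "\<omega> \<in> I"
    then have "\<omega> \<in> Ac (Suc n)" for n unfolding I_def by auto
    then show "\<omega> \<in> {\<omega>\<in>space M. \<not> (\<exists>n. 1 \<le> n \<and> (\<forall>i<k. n + b < X i n \<omega>))}"
    proof -
      have a: "\<omega> \<in> space M \<and> \<not> (\<forall>i<k. Suc n + b < X i (Suc n) \<omega>)" for n
        using \<open>\<omega> \<in> Ac (Suc n)\<close> unfolding Ac_def by blast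
      have "\<not> (\<forall>i<k. n + b < X i n \<omega>)" if "1 \<le> n" for n
      proof -
        have "n = Suc (n - 1)" using that by simp
        then show ?thesis using a[of "n - 1"] by metis
      qed
      then show ?thesis using a[of 0] by blast
    qed
  qed
  then show ?thesis using AE_iff_measurable[OF Iev] p0 by (simp add: emeasure_eq_measure)
qed

lemma part2:
  assumes inf: "(\<Sum>j. ennreal (c j)) = \<infinity>"
  shows "AE \<omega> in M. \<forall>B::int. \<exists>n::nat. 1 \<le> n \<and> \<bar>Rval k (\<lambda>i m. X i m \<omega>) (int n)\<bar> > B"
proof -
  have ns: "\<not> summable c"
  proof
    assume "summable c"
    then have "(\<Sum>j. ennreal (c j)) \<noteq> \<top>" using c_nonneg by (intro ennreal_suminf_neq_top)
    then show False using inf by simp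
  qed
  have "AE \<omega> in M. \<forall>b::nat. \<exists>n. 1 \<le> n \<and> (\<forall>i<k. n + b < X i n \<omega>)"
    using part2b[OF ns] by (subst AE_all_countable) auto
  then show ?thesis
  proof eventually_elim
    case (elim \<omega>)
    show ?case
    proof
      fix B :: int
      show "\<exists>n::nat. 1 \<le> n \<and> \<bar>Rval k (\<lambda>i m. X i m \<omega>) (int n)\<bar> > B"
      proof (cases "B < 0")
        case True
        then show ?thesis by (intro exI[of _ 1]) auto
      next
        case False
        obtain n where n: "1 \<le> n" "\<forall>i<k. n + nat B < X i n \<omega>" using elim by blast
        have "int (nat B) < \<bar>Rval k (\<lambda>i m. X i m \<omega>) (int n)\<bar>"
          using n k1 by (intro Rval_big) auto
        then show ?thesis using False n by (intro exI[of _ n]) auto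
      qed
    qed
  qed
qed

end


theorem mainTheorem16:
  fixes M :: "'a measure" and p :: "nat pmf" and k :: nat
    and X :: "nat \<Rightarrow> nat \<Rightarrow> 'a \<Rightarrow> nat"
  assumes "prob_space M"
    and "k \<ge> 2"
    and "0 \<notin> set_pmf p"
    and "\<And>i n. i < k \<Longrightarrow> 1 \<le> n \<Longrightarrow> X i n \<in> measurable M (count_space UNIV)"
    and "\<And>i n. i < k \<Longrightarrow> 1 \<le> n \<Longrightarrow> distr M (count_space UNIV) (X i n) = measure_pmf p"
    and "prob_space.indep_vars M (\<lambda>_. count_space UNIV) (\<lambda>(i, n). X i n) ({..<k} \<times> {1..})"
  shows "((\<integral>\<^sup>+ \<omega>. of_nat (Min ((\<lambda>i. X i 1 \<omega>) ` {..<k})) \<partial>M) < \<infinity> \<longrightarrow>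
            (AE \<omega> in M. \<exists>B::int. \<forall>n::nat. 1 \<le> n \<longrightarrow>
                \<bar>Rval k (\<lambda>i m. X i m \<omega>) (int n)\<bar> \<le> B))
       \<and> ((\<integral>\<^sup>+ \<omega>. of_nat (Min ((\<lambda>i. X i 1 \<omega>) ` {..<k})) \<partial>M) = \<infinity> \<longrightarrow>
            (AE \<omega> in M. \<forall>B::int. \<exists>n::nat. 1 \<le> n \<and>
                \<bar>Rval k (\<lambda>i m. X i m \<omega>) (int n)\<bar> > B))"
proof -
  interpret kmodel M p k X
    using assms by (intro kmodel.intro kmodel_axioms.intro) auto
  show ?thesis using E_eq part1 part2 by simp
qed

end
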